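(* (i) If $H_1$ and $H_2$ are $\operatorname{IR}$-graphs, then their Cartesian product $H_1 \,\square\, H_2$ is an $\operatorname{IR}$-graph. (ii) For every $n\geq 1$, the hypercube $Q_n$ is an $\operatorname{IR}$-graph; in particular $C_4\cong Q_2$ is an $\operatorname{IR}$-graph.
   Context: All graphs are finite and simple. For a graph $G=(V,E)$, $D\subseteq V$ and $v\in D$, the private neighbourhood of $v$ with respect to $D$ is $\operatorname{PN}(v,D)=N[v]-N[D-\{v\}]$, where $N[\cdot]$ denotes closed neighbourhood. A set $D$ is irredundant if $\operatorname{PN}(v,D)\neq\varnothing$ for every $v\in D$. The upper irredundance number $\operatorname{IR}(G)$ is the largest cardinality of an irredundant set of $G$, and an $\operatorname{IR}(G)$-set is an irredundant set of cardinality $\operatorname{IR}(G)$. The $\operatorname{IR}$-graph $G(\operatorname{IR})$ of $G$ has the $\operatorname{IR}(G)$-sets as vertices, two such sets $D,D'$ being adjacent iff there are $u\in D$, $v\in D'$ with $uv\in E(G)$ and $D'=(D-\{u\})\cup\{v\}$. A graph $H$ is an $\operatorname{IR}$-graph if $H\cong G(\operatorname{IR})$ for some graph $G$. *)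

theory Defs
  imports Main
begin

type_synonym 'a graph = "'a set \<times> 'a set set"

definition verts :: "'a graph \<Rightarrow> 'a set" where "verts G = fst G"
definition edges :: "'a graph \<Rightarrow> 'a set set" where "edges G = snd G"

definition graph :: "'a graph \<Rightarrow> bool" where
  "graph G \<longleftrightarrow> finite (verts G) \<and>
     (\<forall>e\<in>edges G. \<exists>u v. e = {u, v} \<and> u \<noteq> v \<and> u \<in> verts G \<and> v \<in> verts G)"

definition adj :: "'a graph \<Rightarrow> 'a \<Rightarrow> 'a \<Rightarrow> bool" where
  "adj G u v \<longleftrightarrow> {u, v} \<in> edges G"

definition cnbhd :: "'a graph \<Rightarrow> 'a \<Rightarrow> 'a set" where
  "cnbhd G v = {v} \<union> {u \<in> verts G. adj G u v}"

definition cnbhd_set :: "'a graph \<Rightarrow> 'a set \<Rightarrow> 'a set" where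
  "cnbhd_set G S = (\<Union>v\<in>S. cnbhd G v)"

definition PN :: "'a graph \<Rightarrow> 'a \<Rightarrow> 'a set \<Rightarrow> 'a set" where
  "PN G v D = cnbhd G v - cnbhd_set G (D - {v})"

definition irredundant :: "'a graph \<Rightarrow> 'a set \<Rightarrow> bool" where
  "irredundant G D \<longleftrightarrow> D \<subseteq> verts G \<and> (\<forall>v\<in>D. PN G v D \<noteq> {})"

definition IR :: "'a graph \<Rightarrow> nat" where
  "IR G = Max {card D | D. irredundant G D}"

definition IR_sets :: "'a graph \<Rightarrow> 'a set set" where
  "IR_sets G = {D. irredundant G D \<and> card D = IR G}"

definition IR_graph_of :: "'a graph \<Rightarrow> 'a set graph" where
  "IR_graph_of G = (IR_sets G,
     {{D, D'} | D D' u v. D \<in> IR_sets G \<and> D' \<in> IR_sets G \<and> u \<in> D \<and> v \<in> D' \<and>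
        adj G u v \<and> D' = (D - {u}) \<union> {v}})"

definition graph_iso :: "'a graph \<Rightarrow> 'b graph \<Rightarrow> bool" where
  "graph_iso G H \<longleftrightarrow> (\<exists>f. bij_betw f (verts G) (verts H) \<and>
     (\<forall>u\<in>verts G. \<forall>v\<in>verts G. adj G u v \<longleftrightarrow> adj H (f u) (f v)))"

text \<open>H is an IR-graph if it is isomorphic to G(IR) for some finite graph G.
  Every finite graph is isomorphic to one with natural-number vertices, so
  we quantify over graphs on nat.\<close>
definition is_IR_graph :: "'a graph \<Rightarrow> bool" where
  "is_IR_graph H \<longleftrightarrow> graph H \<and> (\<exists>G :: nat graph. graph G \<and> graph_iso (IR_graph_of G) H)"

definition cart_prod :: "'a graph \<Rightarrow> 'b graph \<Rightarrow> ('a \<times> 'b) graph" where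
  "cart_prod G H = (verts G \<times> verts H,
     {{(u, v), (u', v)} | u u' v. adj G u u' \<and> v \<in> verts H} \<union>
     {{(u, v), (u, v')} | u v v'. u \<in> verts G \<and> adj H v v'})"

definition hypercube :: "nat \<Rightarrow> bool list graph" where
  "hypercube n = ({xs. length xs = n},
     {{xs, ys} | xs ys. length xs = n \<and> length ys = n \<and>
        card {i. i < n \<and> xs ! i \<noteq> ys ! i} = 1})"

definition C4 :: "nat graph" where
  "C4 = ({0, 1, 2, 3}, {{0, 1}, {1, 2}, {2, 3}, {3, 0}})"

end

theory Submission
  imports Defs
begin

lemma adj_sym: "adj G u v = adj G v u"
  unfolding adj_def by (simp add: insert_commute)

lemma graph_adjD: "graph G \<Longrightarrow> adj G u v \<Longrightarrow> u \<in> verts G \<and> v \<in> verts G \<and> u \<noteq> v"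
  unfolding graph_def adj_def by (fastforce simp: doubleton_eq_iff)

lemma verts_cart[simp]: "verts (cart_prod G H) = verts G \<times> verts H"
  by (simp add: cart_prod_def verts_def)

lemma adj_cart:
  "adj (cart_prod G H) x y \<longleftrightarrow>
     (adj G (fst x) (fst y) \<and> snd x = snd y \<and> snd x \<in> verts H) \<or>
     (fst x = fst y \<and> fst x \<in> verts G \<and> adj H (snd x) (snd y))"
proof -
  obtain a b where x: "x = (a,b)" by (cases x)
  obtain c d where y: "y = (c,d)" by (cases y)
  show ?thesis
    unfolding x y adj_def cart_prod_def edges_def
    apply (simp add: doubleton_eq_iff insert_commute)
    apply (rule iffI)
     apply (elim disjE exE conjE; simp add: insert_commute)
    apply (elim disjE conjE)
     apply (rule disjI1) apply blast
    apply (rule disjI2) apply blast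
    done
qed

lemma graph_cart: "graph G \<Longrightarrow> graph H \<Longrightarrow> graph (cart_prod G H)"
  unfolding graph_def
  apply (intro conjI)
   apply (simp add: verts_def cart_prod_def)
  apply (auto simp: cart_prod_def edges_def verts_def adj_def)
   apply (metis doubleton_eq_iff)+
  done

lemma graph_iso_sym: "graph_iso G H \<Longrightarrow> graph_iso H G"
  unfolding graph_iso_def
proof (elim exE conjE)
  fix f assume b: "bij_betw f (verts G) (verts H)" and a: "\<forall>u\<in>verts G. \<forall>v\<in>verts G. adj G u v = adj H (f u) (f v)"
  let ?g = "inv_into (verts G) f"
  have "bij_betw ?g (verts H) (verts G)" using b by (rule bij_betw_inv_into)
  moreover have "\<forall>u\<in>verts H. \<forall>v\<in>verts H. adj H u v = adj G (?g u) (?g v)"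
  proof (intro ballI)
    fix u v assume u: "u \<in> verts H" and v: "v \<in> verts H"
    have "?g u \<in> verts G" "?g v \<in> verts G" using u v b by (auto intro: inv_into_into simp: bij_betw_def)
    moreover have "f (?g u) = u" "f (?g v) = v" using u v b by (auto intro: f_inv_into_f simp: bij_betw_def)
    ultimately show "adj H u v = adj G (?g u) (?g v)" using a by metis
  qed
  ultimately show "\<exists>g. bij_betw g (verts H) (verts G) \<and> (\<forall>u\<in>verts H. \<forall>v\<in>verts H. adj H u v = adj G (g u) (g v))" by blast
qed

lemma graph_iso_trans: "graph_iso G H \<Longrightarrow> graph_iso H K \<Longrightarrow> graph_iso G K"
  unfolding graph_iso_def
proof (elim exE conjE)
  fix f g assume b: "bij_betw f (verts G) (verts H)" and a: "\<forall>u\<in>verts G. \<forall>v\<in>verts G. adj G u v = adj H (f u) (f v)"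
    and b2: "bij_betw g (verts H) (verts K)" and a2: "\<forall>u\<in>verts H. \<forall>v\<in>verts H. adj H u v = adj K (g u) (g v)"
  have "bij_betw (g \<circ> f) (verts G) (verts K)" using b b2 by (rule bij_betw_trans)
  moreover have "\<forall>u\<in>verts G. \<forall>v\<in>verts G. adj G u v = adj K ((g \<circ> f) u) ((g \<circ> f) v)"
  proof (intro ballI)
    fix u v assume "u \<in> verts G" "v \<in> verts G"
    moreover then have "f u \<in> verts H" "f v \<in> verts H" using b by (auto simp: bij_betw_def)
    ultimately show "adj G u v = adj K ((g \<circ> f) u) ((g \<circ> f) v)" using a a2 by simp
  qed
  ultimately show "\<exists>h. bij_betw h (verts G) (verts K) \<and> (\<forall>u\<in>verts G. \<forall>v\<in>verts G. adj G u v = adj K (h u) (h v))" by blast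
qed

lemma graph_iso_cart:
  assumes "graph_iso G G'" "graph_iso H H'"
  shows "graph_iso (cart_prod G H) (cart_prod G' H')"
proof -
  from assms obtain f g where b: "bij_betw f (verts G) (verts G')" and a: "\<forall>u\<in>verts G. \<forall>v\<in>verts G. adj G u v = adj G' (f u) (f v)"
    and b2: "bij_betw g (verts H) (verts H')" and a2: "\<forall>u\<in>verts H. \<forall>v\<in>verts H. adj H u v = adj H' (g u) (g v)"
    unfolding graph_iso_def by blast
  have "bij_betw (map_prod f g) (verts G \<times> verts H) (verts G' \<times> verts H')"
    using b b2 by (rule bij_betw_map_prod)
  moreover have "\<forall>x\<in>verts G \<times> verts H. \<forall>y\<in>verts G \<times> verts H.
      adj (cart_prod G H) x y = adj (cart_prod G' H') (map_prod f g x) (map_prod f g y)"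
  proof (intro ballI)
    fix x y assume x: "x \<in> verts G \<times> verts H" and y: "y \<in> verts G \<times> verts H"
    have i1: "fst x = fst y \<longleftrightarrow> f (fst x) = f (fst y)" using b x y by (auto simp: bij_betw_def inj_on_def)
    have i2: "snd x = snd y \<longleftrightarrow> g (snd x) = g (snd y)" using b2 x y by (auto simp: bij_betw_def inj_on_def)
    have "f (fst x) \<in> verts G'" "g (snd x) \<in> verts H'" using x b b2 by (auto simp: bij_betw_def)
    then show "adj (cart_prod G H) x y = adj (cart_prod G' H') (map_prod f g x) (map_prod f g y)"
      unfolding adj_cart using a a2 x y i1 i2 by (auto simp: map_prod_def split: prod.splits)
  qed
  ultimately show ?thesis unfolding graph_iso_def by auto
qed

lemma is_IR_graph_iso: "is_IR_graph H \<Longrightarrow> graph_iso H H' \<Longrightarrow> graph H' \<Longrightarrow> is_IR_graph H'"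
  unfolding is_IR_graph_def using graph_iso_trans by blast

lemma irr_finite: "graph G \<Longrightarrow> irredundant G D \<Longrightarrow> finite D"
  unfolding irredundant_def graph_def by (metis finite_subset)

lemma irr_empty: "irredundant G {}"
  unfolding irredundant_def by simp

lemma IR_fin: assumes "graph G" shows "finite {card D | D. irredundant G D}"
proof -
  have "{card D | D. irredundant G D} \<subseteq> {..card (verts G)}"
    using assms unfolding irredundant_def graph_def by (auto intro: card_mono)
  then show ?thesis by (rule finite_subset) simp
qed

lemma IR_ge: "graph G \<Longrightarrow> irredundant G D \<Longrightarrow> card D \<le> IR G"
  unfolding IR_def using IR_fin[of G] by (auto intro: Max_ge)

lemma IR_ex: "graph G \<Longrightarrow> \<exists>D. irredundant G D \<and> card D = IR G"
proof -
  assume g: "graph G"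
  have "IR G \<in> {card D | D. irredundant G D}"
    unfolding IR_def using IR_fin[OF g] irr_empty[of G] by (intro Max_in) auto
  then show ?thesis by auto
qed

definition R :: "'a graph \<Rightarrow> 'a set \<Rightarrow> 'a set \<Rightarrow> bool" where
  "R G X Y \<longleftrightarrow> X \<in> IR_sets G \<and> Y \<in> IR_sets G \<and> (\<exists>u v. u \<in> X \<and> v \<in> Y \<and> adj G u v \<and> Y = X - {u} \<union> {v})"

lemma verts_IRg[simp]: "verts (IR_graph_of G) = IR_sets G"
  by (simp add: IR_graph_of_def verts_def)

lemma adj_IRg: "adj (IR_graph_of G) X Y \<longleftrightarrow> R G X Y \<or> R G Y X"
  unfolding adj_def IR_graph_of_def edges_def R_def
  apply (simp add: doubleton_eq_iff)
  apply blast
  done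

definition lf :: "nat \<Rightarrow> nat" where "lf n = 2 * n"
definition rt :: "nat \<Rightarrow> nat" where "rt n = 2 * n + 1"

lemma inj_lf: "inj lf" unfolding lf_def inj_def by simp
lemma inj_rt: "inj rt" unfolding rt_def inj_def by simp
lemma lf_eq[simp]: "lf a = lf b \<longleftrightarrow> a = b" unfolding lf_def by simp
lemma rt_eq[simp]: "rt a = rt b \<longleftrightarrow> a = b" unfolding rt_def by simp
lemma lf_rt[simp]: "lf a \<noteq> rt b" "rt b \<noteq> lf a" unfolding lf_def rt_def by presburger+

lemma nat_lr_cases: obtains c where "x = lf c" | c where "x = rt c"
  unfolding lf_def rt_def by (metis dvd_mult_div_cancel odd_two_times_div_two_succ)

definition Phi :: "nat set \<Rightarrow> nat set \<Rightarrow> nat set" where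
  "Phi A B = lf ` A \<union> rt ` B"

lemma lf_in_Phi[simp]: "lf a \<in> Phi A B \<longleftrightarrow> a \<in> A" unfolding Phi_def by auto
lemma rt_in_Phi[simp]: "rt a \<in> Phi A B \<longleftrightarrow> a \<in> B" unfolding Phi_def by auto

lemma Phi_eq_iff[simp]: "Phi A B = Phi C D \<longleftrightarrow> A = C \<and> B = D"
proof
  assume h: "Phi A B = Phi C D"
  have "A = C" proof (rule set_eqI) fix a show "a \<in> A \<longleftrightarrow> a \<in> C" using h lf_in_Phi by metis qed
  moreover have "B = D" proof (rule set_eqI) fix a show "a \<in> B \<longleftrightarrow> a \<in> D" using h rt_in_Phi by metis qed
  ultimately show "A = C \<and> B = D" ..
qed simp

lemma Phi_sub_iff[simp]: "Phi A B \<subseteq> Phi C D \<longleftrightarrow> A \<subseteq> C \<and> B \<subseteq> D"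
  unfolding Phi_def by (auto simp: image_subset_iff)

lemma Phi_decomp: "X = Phi (lf -` X) (rt -` X)"
proof (rule set_eqI)
  fix x show "x \<in> X \<longleftrightarrow> x \<in> Phi (lf -` X) (rt -` X)"
    by (cases x rule: nat_lr_cases) auto
qed

lemma Phi_diff: "Phi A B - Phi C D = Phi (A - C) (B - D)"
  unfolding Phi_def by (auto simp: inj_lf inj_rt)
lemma Phi_un: "Phi A B \<union> Phi C D = Phi (A \<union> C) (B \<union> D)"
  unfolding Phi_def by auto
lemma Phi_UN: "(\<Union>x\<in>S. Phi (f x) (g x)) = Phi (\<Union>x\<in>S. f x) (\<Union>x\<in>S. g x)"
  unfolding Phi_def by auto
lemma Phi_empty[simp]: "Phi A B = {} \<longleftrightarrow> A = {} \<and> B = {}"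
  unfolding Phi_def by auto
lemma Phi_single: "{lf a} = Phi {a} {}" "{rt a} = Phi {} {a}"
  unfolding Phi_def by auto

lemma card_Phi: "finite A \<Longrightarrow> finite B \<Longrightarrow> card (Phi A B) = card A + card B"
  unfolding Phi_def
  apply (subst card_Un_disjoint)
     apply auto
  apply (metis card_image inj_lf inj_rt inj_on_subset subset_UNIV)
  done

definition dunion :: "nat graph \<Rightarrow> nat graph \<Rightarrow> nat graph" where
  "dunion G1 G2 = (Phi (verts G1) (verts G2), image lf ` edges G1 \<union> image rt ` edges G2)"

lemma verts_dunion[simp]: "verts (dunion G1 G2) = Phi (verts G1) (verts G2)"
  by (simp add: dunion_def verts_def)

lemma adj_dunion:
  "adj (dunion G1 G2) x y \<longleftrightarrow> (\<exists>a b. x = lf a \<and> y = lf b \<and> adj G1 a b) \<or> (\<exists>a b. x = rt a \<and> y = rt b \<and> adj G2 a b)"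
proof
  assume "adj (dunion G1 G2) x y"
  then have "{x,y} \<in> image lf ` edges G1 \<or> {x,y} \<in> image rt ` edges G2"
    by (simp add: adj_def dunion_def edges_def)
  then show "(\<exists>a b. x = lf a \<and> y = lf b \<and> adj G1 a b) \<or> (\<exists>a b. x = rt a \<and> y = rt b \<and> adj G2 a b)"
  proof
    assume "{x,y} \<in> image lf ` edges G1"
    then obtain e where e: "e \<in> edges G1" "{x,y} = lf ` e" by auto
    then have "x \<in> lf ` e" "y \<in> lf ` e" by (simp_all add: e(2)[symmetric])
    then obtain a b where ab: "x = lf a" "y = lf b" by blast
    then have "lf ` e = lf ` {a,b}" using e(2) by simp
    then have "e = {a,b}" by (simp only: inj_image_eq_iff[OF inj_lf])
    then show ?thesis using ab e by (simp add: adj_def)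
  next
    assume "{x,y} \<in> image rt ` edges G2"
    then obtain e where e: "e \<in> edges G2" "{x,y} = rt ` e" by auto
    then have "x \<in> rt ` e" "y \<in> rt ` e" by (simp_all add: e(2)[symmetric])
    then obtain a b where ab: "x = rt a" "y = rt b" by blast
    then have "rt ` e = rt ` {a,b}" using e(2) by simp
    then have "e = {a,b}" by (simp only: inj_image_eq_iff[OF inj_rt])
    then show ?thesis using ab e by (simp add: adj_def)
  qed
next
  assume "(\<exists>a b. x = lf a \<and> y = lf b \<and> adj G1 a b) \<or> (\<exists>a b. x = rt a \<and> y = rt b \<and> adj G2 a b)"
  then show "adj (dunion G1 G2) x y"
  proof
    assume "\<exists>a b. x = lf a \<and> y = lf b \<and> adj G1 a b"
    then obtain a b where "x = lf a" "y = lf b" "{a,b} \<in> edges G1" unfolding adj_def by blast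
    then have "{x,y} = image lf {a,b}" by simp
    then have "{x,y} \<in> image lf ` edges G1" using \<open>{a,b} \<in> edges G1\<close> by (rule image_eqI)
    then show ?thesis unfolding adj_def dunion_def edges_def by simp
  next
    assume "\<exists>a b. x = rt a \<and> y = rt b \<and> adj G2 a b"
    then obtain a b where "x = rt a" "y = rt b" "{a,b} \<in> edges G2" unfolding adj_def by blast
    then have "{x,y} = image rt {a,b}" by simp
    then have "{x,y} \<in> image rt ` edges G2" using \<open>{a,b} \<in> edges G2\<close> by (rule image_eqI)
    then show ?thesis unfolding adj_def dunion_def edges_def by simp
  qed
qed

lemma adj_dunion_simps[simp]:
  "adj (dunion G1 G2) (lf a) (lf b) \<longleftrightarrow> adj G1 a b"
  "adj (dunion G1 G2) (rt a) (rt b) \<longleftrightarrow> adj G2 a b"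
  "\<not> adj (dunion G1 G2) (lf a) (rt b)"
  "\<not> adj (dunion G1 G2) (rt a) (lf b)"
  by (auto simp: adj_dunion)

lemma graph_dunion: assumes g1: "graph G1" and g2: "graph G2" shows "graph (dunion G1 G2)"
  unfolding graph_def
proof (intro conjI ballI)
  show "finite (verts (dunion G1 G2))" using g1 g2 by (simp add: Phi_def graph_def)
next
  fix e assume "e \<in> edges (dunion G1 G2)"
  then have "e \<in> image lf ` edges G1 \<or> e \<in> image rt ` edges G2" by (simp add: dunion_def edges_def)
  then show "\<exists>u v. e = {u, v} \<and> u \<noteq> v \<and> u \<in> verts (dunion G1 G2) \<and> v \<in> verts (dunion G1 G2)"
  proof
    assume "e \<in> image lf ` edges G1"
    then obtain e' where e': "e' \<in> edges G1" "e = lf ` e'" by auto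
    then obtain u v where "e' = {u,v}" "u \<noteq> v" "u \<in> verts G1" "v \<in> verts G1" using g1 unfolding graph_def by blast
    then show ?thesis using e' by (intro exI[of _ "lf u"] exI[of _ "lf v"]) simp
  next
    assume "e \<in> image rt ` edges G2"
    then obtain e' where e': "e' \<in> edges G2" "e = rt ` e'" by auto
    then obtain u v where "e' = {u,v}" "u \<noteq> v" "u \<in> verts G2" "v \<in> verts G2" using g2 unfolding graph_def by blast
    then show ?thesis using e' by (intro exI[of _ "rt u"] exI[of _ "rt v"]) simp
  qed
qed

lemma cnbhd_lf: "cnbhd (dunion G1 G2) (lf a) = Phi (cnbhd G1 a) {}"
proof (rule set_eqI)
  fix x show "x \<in> cnbhd (dunion G1 G2) (lf a) \<longleftrightarrow> x \<in> Phi (cnbhd G1 a) {}"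
    by (cases x rule: nat_lr_cases) (auto simp: cnbhd_def)
qed

lemma cnbhd_rt: "cnbhd (dunion G1 G2) (rt a) = Phi {} (cnbhd G2 a)"
proof (rule set_eqI)
  fix x show "x \<in> cnbhd (dunion G1 G2) (rt a) \<longleftrightarrow> x \<in> Phi {} (cnbhd G2 a)"
    by (cases x rule: nat_lr_cases) (auto simp: cnbhd_def)
qed

lemma cnbhd_set_Phi: "cnbhd_set (dunion G1 G2) (Phi A B) = Phi (cnbhd_set G1 A) (cnbhd_set G2 B)"
proof (rule set_eqI)
  fix x show "x \<in> cnbhd_set (dunion G1 G2) (Phi A B) \<longleftrightarrow> x \<in> Phi (cnbhd_set G1 A) (cnbhd_set G2 B)"
    unfolding cnbhd_set_def Phi_def
    by (auto simp: cnbhd_lf cnbhd_rt Phi_def)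
qed

lemma PN_lf: "PN (dunion G1 G2) (lf a) (Phi A B) = Phi (PN G1 a A) {}"
proof -
  have "Phi A B - {lf a} = Phi (A - {a}) B" by (simp add: Phi_single Phi_diff)
  then show ?thesis unfolding PN_def by (simp add: cnbhd_lf cnbhd_set_Phi Phi_diff)
qed

lemma PN_rt: "PN (dunion G1 G2) (rt a) (Phi A B) = Phi {} (PN G2 a B)"
proof -
  have "Phi A B - {rt a} = Phi A (B - {a})" by (simp add: Phi_single Phi_diff)
  then show ?thesis unfolding PN_def by (simp add: cnbhd_rt cnbhd_set_Phi Phi_diff)
qed

lemma Ball_Phi: "(\<forall>v\<in>Phi A B. P v) \<longleftrightarrow> (\<forall>a\<in>A. P (lf a)) \<and> (\<forall>b\<in>B. P (rt b))"
  unfolding Phi_def by blast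

lemma irr_Phi: "irredundant (dunion G1 G2) (Phi A B) \<longleftrightarrow> irredundant G1 A \<and> irredundant G2 B"
proof -
  have "(\<forall>v\<in>Phi A B. PN (dunion G1 G2) v (Phi A B) \<noteq> {}) \<longleftrightarrow>
        (\<forall>v\<in>A. PN G1 v A \<noteq> {}) \<and> (\<forall>v\<in>B. PN G2 v B \<noteq> {})"
    unfolding Ball_Phi by (simp add: PN_lf PN_rt)
  then show ?thesis unfolding irredundant_def verts_dunion Phi_sub_iff by blast
qed

lemma IR_dunion: assumes g1: "graph G1" and g2: "graph G2"
  shows "IR (dunion G1 G2) = IR G1 + IR G2"
proof (rule antisym)
  have g: "graph (dunion G1 G2)" using g1 g2 by (rule graph_dunion)
  obtain D where D: "irredundant (dunion G1 G2) D" "card D = IR (dunion G1 G2)" using IR_ex[OF g] by blast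
  let ?A = "lf -` D" and ?B = "rt -` D"
  have DA: "D = Phi ?A ?B" by (rule Phi_decomp)
  then have "irredundant G1 ?A" "irredundant G2 ?B" using D(1) irr_Phi by metis+
  moreover then have "finite ?A" "finite ?B" using g1 g2 irr_finite by blast+
  ultimately show "IR (dunion G1 G2) \<le> IR G1 + IR G2"
    using D(2) DA card_Phi IR_ge[OF g1] IR_ge[OF g2] by (metis add_mono)
next
  have g: "graph (dunion G1 G2)" using g1 g2 by (rule graph_dunion)
  obtain A where A: "irredundant G1 A" "card A = IR G1" using IR_ex[OF g1] by blast
  obtain B where B: "irredundant G2 B" "card B = IR G2" using IR_ex[OF g2] by blast
  have "irredundant (dunion G1 G2) (Phi A B)" using A B irr_Phi by blast
  moreover have "card (Phi A B) = IR G1 + IR G2"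
    using card_Phi[OF irr_finite[OF g1 A(1)] irr_finite[OF g2 B(1)]] A(2) B(2) by simp
  ultimately show "IR G1 + IR G2 \<le> IR (dunion G1 G2)" using IR_ge[OF g] by metis
qed

lemma Phi_IR: assumes g1: "graph G1" and g2: "graph G2"
  shows "Phi A B \<in> IR_sets (dunion G1 G2) \<longleftrightarrow> A \<in> IR_sets G1 \<and> B \<in> IR_sets G2"
proof
  assume h: "Phi A B \<in> IR_sets (dunion G1 G2)"
  then have i: "irredundant G1 A" "irredundant G2 B" unfolding IR_sets_def using irr_Phi by blast+
  then have f: "finite A" "finite B" using g1 g2 irr_finite by blast+
  have "card A + card B = IR G1 + IR G2" using h f unfolding IR_sets_def by (simp add: card_Phi IR_dunion g1 g2)
  moreover have "card A \<le> IR G1" "card B \<le> IR G2" using i IR_ge g1 g2 by blast+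
  ultimately show "A \<in> IR_sets G1 \<and> B \<in> IR_sets G2" using i unfolding IR_sets_def by simp
next
  assume h: "A \<in> IR_sets G1 \<and> B \<in> IR_sets G2"
  then have i: "irredundant G1 A" "irredundant G2 B" "card A = IR G1" "card B = IR G2" unfolding IR_sets_def by blast+
  have "irredundant (dunion G1 G2) (Phi A B)" using i irr_Phi by blast
  moreover have "card (Phi A B) = IR (dunion G1 G2)"
    using card_Phi[OF irr_finite[OF g1 i(1)] irr_finite[OF g2 i(2)]] i(3,4) IR_dunion[OF g1 g2] by simp
  ultimately show "Phi A B \<in> IR_sets (dunion G1 G2)" unfolding IR_sets_def by blast
qed

lemma Phi_ins_lf: "Phi A B - {lf a} \<union> {lf b} = Phi (A - {a} \<union> {b}) B"
  by (simp add: Phi_single Phi_diff Phi_un)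
lemma Phi_ins_rt: "Phi A B - {rt a} \<union> {rt b} = Phi A (B - {a} \<union> {b})"
  by (simp add: Phi_single Phi_diff Phi_un)

lemma R_Phi: assumes g1: "graph G1" and g2: "graph G2"
  shows "R (dunion G1 G2) (Phi A1 A2) (Phi B1 B2) \<longleftrightarrow>
    (R G1 A1 B1 \<and> A2 = B2 \<and> A2 \<in> IR_sets G2) \<or> (A1 = B1 \<and> A1 \<in> IR_sets G1 \<and> R G2 A2 B2)"
proof
  assume h: "R (dunion G1 G2) (Phi A1 A2) (Phi B1 B2)"
  then have s: "A1 \<in> IR_sets G1" "A2 \<in> IR_sets G2" "B1 \<in> IR_sets G1" "B2 \<in> IR_sets G2"
    unfolding R_def using Phi_IR[OF g1 g2] by blast+
  from h obtain u v where uv: "u \<in> Phi A1 A2" "v \<in> Phi B1 B2" "adj (dunion G1 G2) u v"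
    "Phi B1 B2 = Phi A1 A2 - {u} \<union> {v}" unfolding R_def by blast
  from uv(3) show "(R G1 A1 B1 \<and> A2 = B2 \<and> A2 \<in> IR_sets G2) \<or> (A1 = B1 \<and> A1 \<in> IR_sets G1 \<and> R G2 A2 B2)"
    unfolding adj_dunion
  proof (elim disjE exE conjE)
    fix a b assume ab: "u = lf a" "v = lf b" "adj G1 a b"
    then have e: "B1 = A1 - {a} \<union> {b}" "B2 = A2" using uv(4)[unfolded ab(1,2) Phi_ins_lf] by (simp_all only: Phi_eq_iff)
    have "a \<in> A1" "b \<in> B1" using uv(1,2) unfolding ab(1,2) lf_in_Phi .
    then have "R G1 A1 B1" unfolding R_def using s(1,3) ab(3) e(1) by blast
    then show ?thesis using e(2) s(2) by blast
  next
    fix a b assume ab: "u = rt a" "v = rt b" "adj G2 a b"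
    then have e: "B1 = A1" "B2 = A2 - {a} \<union> {b}" using uv(4)[unfolded ab(1,2) Phi_ins_rt] by (simp_all only: Phi_eq_iff)
    have "a \<in> A2" "b \<in> B2" using uv(1,2) unfolding ab(1,2) rt_in_Phi .
    then have "R G2 A2 B2" unfolding R_def using s(2,4) ab(3) e(2) by blast
    then show ?thesis using e(1) s(1) by blast
  qed
next
  assume "(R G1 A1 B1 \<and> A2 = B2 \<and> A2 \<in> IR_sets G2) \<or> (A1 = B1 \<and> A1 \<in> IR_sets G1 \<and> R G2 A2 B2)"
  then show "R (dunion G1 G2) (Phi A1 A2) (Phi B1 B2)"
  proof
    assume h: "R G1 A1 B1 \<and> A2 = B2 \<and> A2 \<in> IR_sets G2"
    then obtain a b where ab: "a \<in> A1" "b \<in> B1" "adj G1 a b" "B1 = A1 - {a} \<union> {b}" unfolding R_def by blast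
    have i: "Phi A1 A2 \<in> IR_sets (dunion G1 G2)" "Phi B1 B2 \<in> IR_sets (dunion G1 G2)"
      using h Phi_IR[OF g1 g2] unfolding R_def by blast+
    have "Phi B1 B2 = Phi (A1 - {a} \<union> {b}) A2" using ab(4) h by simp
    then have e: "Phi B1 B2 = Phi A1 A2 - {lf a} \<union> {lf b}" unfolding Phi_ins_lf .
    have "lf a \<in> Phi A1 A2" "lf b \<in> Phi B1 B2" "adj (dunion G1 G2) (lf a) (lf b)" using ab by simp_all
    then show ?thesis unfolding R_def using i e by blast
  next
    assume h: "A1 = B1 \<and> A1 \<in> IR_sets G1 \<and> R G2 A2 B2"
    then obtain a b where ab: "a \<in> A2" "b \<in> B2" "adj G2 a b" "B2 = A2 - {a} \<union> {b}" unfolding R_def by blast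
    have i: "Phi A1 A2 \<in> IR_sets (dunion G1 G2)" "Phi B1 B2 \<in> IR_sets (dunion G1 G2)"
      using h Phi_IR[OF g1 g2] unfolding R_def by blast+
    have "Phi B1 B2 = Phi A1 (A2 - {a} \<union> {b})" using ab(4) h by simp
    then have e: "Phi B1 B2 = Phi A1 A2 - {rt a} \<union> {rt b}" unfolding Phi_ins_rt .
    have "rt a \<in> Phi A1 A2" "rt b \<in> Phi B1 B2" "adj (dunion G1 G2) (rt a) (rt b)" using ab by simp_all
    then show ?thesis unfolding R_def using i e by blast
  qed
qed

lemma iso_dunion: assumes g1: "graph G1" and g2: "graph G2"
  shows "graph_iso (cart_prod (IR_graph_of G1) (IR_graph_of G2)) (IR_graph_of (dunion G1 G2))"
  unfolding graph_iso_def
proof (intro exI[of _ "\<lambda>(A,B). Phi A B"] conjI ballI)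
  show "bij_betw (\<lambda>(A,B). Phi A B) (verts (cart_prod (IR_graph_of G1) (IR_graph_of G2))) (verts (IR_graph_of (dunion G1 G2)))"
    unfolding bij_betw_def
  proof
    show "inj_on (\<lambda>(A,B). Phi A B) (verts (cart_prod (IR_graph_of G1) (IR_graph_of G2)))"
      by (auto simp: inj_on_def)
    show "(\<lambda>(A,B). Phi A B) ` verts (cart_prod (IR_graph_of G1) (IR_graph_of G2)) = verts (IR_graph_of (dunion G1 G2))"
    proof (rule set_eqI)
      fix X
      show "X \<in> (\<lambda>(A,B). Phi A B) ` verts (cart_prod (IR_graph_of G1) (IR_graph_of G2)) \<longleftrightarrow> X \<in> verts (IR_graph_of (dunion G1 G2))"
      proof
        assume "X \<in> (\<lambda>(A,B). Phi A B) ` verts (cart_prod (IR_graph_of G1) (IR_graph_of G2))"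
        then obtain A B where "X = Phi A B" "A \<in> IR_sets G1" "B \<in> IR_sets G2" by auto
        then show "X \<in> verts (IR_graph_of (dunion G1 G2))" using Phi_IR[OF g1 g2] by simp
      next
        assume a: "X \<in> verts (IR_graph_of (dunion G1 G2))"
        have d: "X = Phi (lf -` X) (rt -` X)" by (rule Phi_decomp)
        then have "(lf -` X, rt -` X) \<in> verts (cart_prod (IR_graph_of G1) (IR_graph_of G2))"
          using a Phi_IR[OF g1 g2] by (metis SigmaI verts_IRg verts_cart)
        then show "X \<in> (\<lambda>(A,B). Phi A B) ` verts (cart_prod (IR_graph_of G1) (IR_graph_of G2))"
          using d by (metis (no_types, lifting) case_prod_conv image_eqI)
      qed
    qed
  qed
next
  fix x y assume x: "x \<in> verts (cart_prod (IR_graph_of G1) (IR_graph_of G2))" and y: "y \<in> verts (cart_prod (IR_graph_of G1) (IR_graph_of G2))"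
  obtain A1 A2 where xa: "x = (A1,A2)" by (cases x)
  obtain B1 B2 where yb: "y = (B1,B2)" by (cases y)
  show "adj (cart_prod (IR_graph_of G1) (IR_graph_of G2)) x y = adj (IR_graph_of (dunion G1 G2)) ((\<lambda>(A,B). Phi A B) x) ((\<lambda>(A,B). Phi A B) y)"
    unfolding xa yb
    by (simp only: adj_cart adj_IRg R_Phi[OF g1 g2] fst_conv snd_conv case_prod_conv verts_IRg) blast
qed

lemma part1:
  assumes "is_IR_graph H1" "is_IR_graph H2"
  shows "is_IR_graph (cart_prod H1 H2)"
proof -
  obtain G1 :: "nat graph" where g1: "graph G1" "graph_iso (IR_graph_of G1) H1" and h1: "graph H1"
    using assms(1) unfolding is_IR_graph_def by blast
  obtain G2 :: "nat graph" where g2: "graph G2" "graph_iso (IR_graph_of G2) H2" and h2: "graph H2"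
    using assms(2) unfolding is_IR_graph_def by blast
  have "graph_iso (IR_graph_of (dunion G1 G2)) (cart_prod (IR_graph_of G1) (IR_graph_of G2))"
    using iso_dunion[OF g1(1) g2(1)] by (rule graph_iso_sym)
  moreover have "graph_iso (cart_prod (IR_graph_of G1) (IR_graph_of G2)) (cart_prod H1 H2)"
    using g1(2) g2(2) by (rule graph_iso_cart)
  ultimately have "graph_iso (IR_graph_of (dunion G1 G2)) (cart_prod H1 H2)" by (rule graph_iso_trans)
  moreover have "graph (dunion G1 G2)" using g1(1) g2(1) by (rule graph_dunion)
  moreover have "graph (cart_prod H1 H2)" using h1 h2 by (rule graph_cart)
  ultimately show ?thesis unfolding is_IR_graph_def by blast
qed

definition dset :: "nat \<Rightarrow> bool list \<Rightarrow> bool list \<Rightarrow> nat set" where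
  "dset n xs ys = {i. i < n \<and> xs ! i \<noteq> ys ! i}"

lemma dset_sym: "dset n xs ys = dset n ys xs" unfolding dset_def by auto

lemma verts_hyp[simp]: "verts (hypercube n) = {xs. length xs = n}"
  by (simp add: hypercube_def verts_def)

lemma adj_hyp: "adj (hypercube n) xs ys \<longleftrightarrow> length xs = n \<and> length ys = n \<and> card (dset n xs ys) = 1"
proof -
  have "adj (hypercube n) xs ys \<longleftrightarrow> (\<exists>a b. {xs, ys} = {a, b} \<and> length a = n \<and> length b = n \<and> card (dset n a b) = 1)"
    unfolding adj_def hypercube_def edges_def dset_def by simp
  also have "\<dots> \<longleftrightarrow> length xs = n \<and> length ys = n \<and> card (dset n xs ys) = 1"
  proof
    assume "\<exists>a b. {xs, ys} = {a, b} \<and> length a = n \<and> length b = n \<and> card (dset n a b) = 1"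
    then obtain a b where "{xs, ys} = {a, b}" "length a = n" "length b = n" "card (dset n a b) = 1" by blast
    then show "length xs = n \<and> length ys = n \<and> card (dset n xs ys) = 1"
      unfolding doubleton_eq_iff using dset_sym by metis
  qed blast
  finally show ?thesis .
qed

lemma dset_empty: "length xs = n \<Longrightarrow> length ys = n \<Longrightarrow> dset n xs ys = {} \<longleftrightarrow> xs = ys"
  unfolding dset_def by (auto intro: nth_equalityI)

lemma graph_hyp: "graph (hypercube n)"
  unfolding graph_def
proof (intro conjI ballI)
  have "{xs :: bool list. length xs = n} = {xs. set xs \<subseteq> UNIV \<and> length xs = n}" by simp
  then show "finite (verts (hypercube n))" using finite_lists_length_eq[of "UNIV :: bool set" n] by simp
next
  fix e assume "e \<in> edges (hypercube n)"
  then obtain xs ys where e: "e = {xs, ys}" "length xs = n" "length ys = n" "card {i. i < n \<and> xs ! i \<noteq> ys ! i} = 1"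
    unfolding hypercube_def edges_def by (simp only: snd_conv mem_Collect_eq) blast
  have "xs \<noteq> ys"
  proof
    assume "xs = ys"
    then have "{i. i < n \<and> xs ! i \<noteq> ys ! i} = {}" by simp
    then show False using e(4) by (metis card.empty zero_neq_one)
  qed
  then show "\<exists>u v. e = {u, v} \<and> u \<noteq> v \<and> u \<in> verts (hypercube n) \<and> v \<in> verts (hypercube n)"
    using e(1-3) by (intro exI[of _ xs] exI[of _ ys]) simp
qed

lemma dset_append:
  assumes "length xs = n" "length ys = n" "length xs' = m" "length ys' = m"
  shows "dset (n + m) (xs @ xs') (ys @ ys') = dset n xs ys \<union> (\<lambda>i. i + n) ` dset m xs' ys'"
proof (rule set_eqI)
  fix i
  show "i \<in> dset (n + m) (xs @ xs') (ys @ ys') \<longleftrightarrow> i \<in> dset n xs ys \<union> (\<lambda>i. i + n) ` dset m xs' ys'"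
  proof (cases "i < n")
    case True then show ?thesis using assms by (auto simp: dset_def nth_append)
  next
    case False
    then have "i \<in> (\<lambda>i. i + n) ` dset m xs' ys' \<longleftrightarrow> i - n \<in> dset m xs' ys'"
      by (auto simp: image_iff) (metis le_add_diff_inverse2 not_less)
    then show ?thesis using assms False by (auto simp: dset_def nth_append)
  qed
qed

lemma card_dset_append:
  assumes "length xs = n" "length ys = n" "length xs' = m" "length ys' = m"
  shows "card (dset (n + m) (xs @ xs') (ys @ ys')) = card (dset n xs ys) + card (dset m xs' ys')"
proof -
  have f: "finite (dset n xs ys)" "finite (dset m xs' ys')" unfolding dset_def by auto
  have d: "dset n xs ys \<inter> (\<lambda>i. i + n) ` dset m xs' ys' = {}" unfolding dset_def by auto
  show ?thesis unfolding dset_append[OF assms]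
    using f d by (simp add: card_Un_disjoint card_image inj_on_def)
qed

lemma iso_hyp: "graph_iso (cart_prod (hypercube n) (hypercube m)) (hypercube (n + m))"
  unfolding graph_iso_def
proof (intro exI[of _ "\<lambda>(xs,ys). xs @ ys"] conjI ballI)
  show "bij_betw (\<lambda>(xs,ys). xs @ ys) (verts (cart_prod (hypercube n) (hypercube m))) (verts (hypercube (n + m)))"
    unfolding bij_betw_def
  proof
    show "inj_on (\<lambda>(xs,ys). xs @ ys) (verts (cart_prod (hypercube n) (hypercube m)))"
      by (auto simp: inj_on_def)
    show "(\<lambda>(xs,ys). xs @ ys) ` verts (cart_prod (hypercube n) (hypercube m)) = verts (hypercube (n + m))"
    proof (rule set_eqI)
      fix zs
      show "zs \<in> (\<lambda>(xs,ys). xs @ ys) ` verts (cart_prod (hypercube n) (hypercube m)) \<longleftrightarrow> zs \<in> verts (hypercube (n + m))"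
      proof
        assume "zs \<in> verts (hypercube (n + m))"
        then have "length zs = n + m" by simp
        then have "(take n zs, drop n zs) \<in> verts (cart_prod (hypercube n) (hypercube m))" by simp
        then show "zs \<in> (\<lambda>(xs,ys). xs @ ys) ` verts (cart_prod (hypercube n) (hypercube m))"
          by (metis (no_types, lifting) append_take_drop_id case_prod_conv image_eqI)
      qed auto
    qed
  qed
next
  fix x y assume x: "x \<in> verts (cart_prod (hypercube n) (hypercube m))" and y: "y \<in> verts (cart_prod (hypercube n) (hypercube m))"
  obtain xs xs' where xa: "x = (xs,xs')" by (cases x)
  obtain ys ys' where yb: "y = (ys,ys')" by (cases y)
  have l: "length xs = n" "length xs' = m" "length ys = n" "length ys' = m" using x y xa yb by auto
  have c: "card (dset (n + m) (xs @ xs') (ys @ ys')) = card (dset n xs ys) + card (dset m xs' ys')"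
    using card_dset_append l by simp
  have e1: "card (dset n xs ys) = 0 \<longleftrightarrow> xs = ys" using dset_empty[of xs n ys] l unfolding dset_def by simp
  have e2: "card (dset m xs' ys') = 0 \<longleftrightarrow> xs' = ys'" using dset_empty[of xs' m ys'] l unfolding dset_def by simp
  show "adj (cart_prod (hypercube n) (hypercube m)) x y = adj (hypercube (n + m)) ((\<lambda>(xs,ys). xs @ ys) x) ((\<lambda>(xs,ys). xs @ ys) y)"
    unfolding xa yb adj_cart adj_hyp using l c e1 e2 by auto
qed

definition G0 :: "nat graph" where "G0 = ({0, 1}, {{0, 1}})"

lemma verts_G0: "verts G0 = {0,1}" by (simp add: G0_def verts_def)

lemma adj_G0: "adj G0 u v \<longleftrightarrow> (u = 0 \<and> v = 1) \<or> (u = 1 \<and> v = 0)"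
  unfolding adj_def G0_def edges_def by (auto simp: doubleton_eq_iff)

lemma graph_G0: "graph G0"
  unfolding graph_def verts_G0 by (auto simp: G0_def edges_def)

lemma cnbhd_G0: "cnbhd G0 0 = {0,1}" "cnbhd G0 1 = {0,1}"
  unfolding cnbhd_def verts_G0 adj_G0 by auto

lemma cnbhd_G0': "cnbhd G0 (Suc 0) = {0, Suc 0}"
  using cnbhd_G0(2) by simp

lemma irr_G0: "irredundant G0 D \<longleftrightarrow> D = {} \<or> D = {0} \<or> D = {1}"
proof
  assume h: "irredundant G0 D"
  then have s: "D \<subseteq> {0,1}" unfolding irredundant_def verts_G0 by simp
  have "\<not> {0,1} \<subseteq> D"
  proof
    assume "{0,1} \<subseteq> D"
    then have "D = {0,1}" using s by auto
    moreover have "PN G0 0 {0,1} = {}" unfolding PN_def cnbhd_set_def by (simp add: cnbhd_G0 cnbhd_G0')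
    ultimately show False using h unfolding irredundant_def by auto
  qed
  then show "D = {} \<or> D = {0} \<or> D = {1}" using s by auto
next
  assume "D = {} \<or> D = {0} \<or> D = {1}"
  moreover have "PN G0 0 {0} = {0,1}" "PN G0 1 {1} = {0,1}" unfolding PN_def cnbhd_set_def by (simp_all add: cnbhd_G0 cnbhd_G0')
  ultimately show "irredundant G0 D" unfolding irredundant_def verts_G0 by auto
qed

lemma IR_G0: "IR G0 = 1"
proof -
  have "{card D | D. irredundant G0 D} = {0, 1}"
  proof (rule set_eqI)
    fix k
    show "k \<in> {card D | D. irredundant G0 D} \<longleftrightarrow> k \<in> {0, 1}"
    proof
      assume "k \<in> {card D | D. irredundant G0 D}"
      then obtain D :: "nat set" where "k = card D" "D = {} \<or> D = {0} \<or> D = {1}" unfolding irr_G0 by blast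
      then show "k \<in> {0, 1}" by auto
    next
      assume "k \<in> {0, 1}"
      moreover have "0 = card ({}::nat set) \<and> irredundant G0 {}" by (simp add: irr_G0)
      moreover have "1 = card ({0}::nat set) \<and> irredundant G0 {0}" by (simp add: irr_G0)
      ultimately show "k \<in> {card D | D. irredundant G0 D}" by blast
    qed
  qed
  then show ?thesis unfolding IR_def by simp
qed

lemma IR_sets_G0: "IR_sets G0 = {{0},{1}}"
  unfolding IR_sets_def IR_G0 irr_G0 by auto

lemma R_G0: "R G0 X Y \<longleftrightarrow> X \<in> {{0},{1}} \<and> Y \<in> {{0},{1}} \<and> X \<noteq> Y"
proof
  assume "R G0 X Y"
  then obtain u v where h: "X \<in> {{0},{1}}" "Y \<in> {{0},{1}}" "u \<in> X" "adj G0 u v" "Y = X - {u} \<union> {v}"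
    unfolding R_def IR_sets_G0 by blast
  have "u \<noteq> v" using h(4) adj_G0 by auto
  then show "X \<in> {{0},{1}} \<and> Y \<in> {{0},{1}} \<and> X \<noteq> Y" using h by auto
next
  assume h: "X \<in> {{0},{1}} \<and> Y \<in> {{0},{1}} \<and> X \<noteq> Y"
  then have "(X = {0} \<and> Y = {1}) \<or> (X = {1} \<and> Y = {0})" by auto
  then show "R G0 X Y"
  proof
    assume "X = {0} \<and> Y = {1}"
    then show ?thesis unfolding R_def IR_sets_G0
      by (intro conjI exI[of _ "0::nat"] exI[of _ "1::nat"]) (auto simp: adj_G0)
  next
    assume "X = {1} \<and> Y = {0}"
    then show ?thesis unfolding R_def IR_sets_G0
      by (intro conjI exI[of _ "1::nat"] exI[of _ "0::nat"]) (auto simp: adj_G0)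
  qed
qed

lemma len1: "length xs = Suc 0 \<longleftrightarrow> (\<exists>a. xs = [a])"
  by (cases xs) auto

lemma adj_hyp1: "adj (hypercube 1) [a] [b] \<longleftrightarrow> a \<noteq> b"
proof -
  have "dset 1 [a] [b] = (if a = b then {} else {0})" unfolding dset_def by auto
  then show ?thesis unfolding adj_hyp by simp
qed

lemma hyp1_IR: "is_IR_graph (hypercube 1)"
  unfolding is_IR_graph_def
proof (intro conjI exI[of _ G0])
  show "graph (hypercube 1)" by (rule graph_hyp)
  show "graph G0" by (rule graph_G0)
  show "graph_iso (IR_graph_of G0) (hypercube 1)"
    unfolding graph_iso_def
  proof (intro exI[of _ "\<lambda>X. [1 \<in> X]"] conjI ballI)
    have v: "verts (hypercube 1) = {[False], [True]}" by (auto simp: len1)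
    show "bij_betw (\<lambda>X. [(1::nat) \<in> X]) (verts (IR_graph_of G0)) (verts (hypercube 1))"
      unfolding v verts_IRg IR_sets_G0 bij_betw_def inj_on_def by auto
  next
    fix X Y assume "X \<in> verts (IR_graph_of G0)" "Y \<in> verts (IR_graph_of G0)"
    then have "X \<in> {{0},{1}}" "Y \<in> {{0},{1}}" unfolding verts_IRg IR_sets_G0 .
    then show "adj (IR_graph_of G0) X Y = adj (hypercube 1) [1 \<in> X] [1 \<in> Y]"
      unfolding adj_hyp1 adj_IRg R_G0 by auto
  qed
qed

lemma hyp_IR: "n \<ge> 1 \<Longrightarrow> is_IR_graph (hypercube n)"
proof (induction n rule: dec_induct)
  case base then show ?case by (rule hyp1_IR)
next
  case (step n)
  have "is_IR_graph (cart_prod (hypercube n) (hypercube 1))" using step(3) hyp1_IR by (rule part1)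
  then show ?case using iso_hyp[of n 1] graph_hyp[of "n + 1"] is_IR_graph_iso by simp
qed

lemma verts_C4: "verts C4 = {0,1,2,3}" by (simp add: C4_def verts_def)

lemma adj_C4: "adj C4 u v \<longleftrightarrow> {u,v} \<in> {{0, 1}, {1, 2}, {2, 3}, {3, 0}}"
  by (simp add: adj_def C4_def edges_def)

lemma graph_C4: "graph C4"
  unfolding graph_def verts_C4
proof (intro conjI ballI)
  show "finite {0::nat, 1, 2, 3}" by simp
next
  fix e assume "e \<in> edges C4"
  then have "e = {0,1} \<or> e = {1,2} \<or> e = {2,3} \<or> e = {3,0}" by (simp add: C4_def edges_def)
  then show "\<exists>u v. e = {u, v} \<and> u \<noteq> v \<and> u \<in> {0::nat, 1, 2, 3} \<and> v \<in> {0, 1, 2, 3}"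
  proof (elim disjE)
    assume "e = {0,1}" then show ?thesis by (intro exI[of _ "0::nat"] exI[of _ "1::nat"]) simp
  next
    assume "e = {1,2}" then show ?thesis by (intro exI[of _ "1::nat"] exI[of _ "2::nat"]) simp
  next
    assume "e = {2,3}" then show ?thesis by (intro exI[of _ "2::nat"] exI[of _ "3::nat"]) simp
  next
    assume "e = {3,0}" then show ?thesis by (intro exI[of _ "3::nat"] exI[of _ "0::nat"]) simp
  qed
qed

lemma adj_hyp2: "adj (hypercube 2) [a,b] [c,d] \<longleftrightarrow> (a = c \<and> b \<noteq> d) \<or> (a \<noteq> c \<and> b = d)"
proof -
  have e: "dset 2 [a,b] [c,d] = (if a \<noteq> c then {0} else {}) \<union> (if b \<noteq> d then {1} else {})"
    unfolding dset_def by (auto simp: less_2_cases_iff)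
  show ?thesis unfolding adj_hyp e by auto
qed

lemma len2: "length xs = 2 \<longleftrightarrow> (\<exists>a b. xs = [a,b])"
proof
  assume "length xs = 2"
  then show "\<exists>a b. xs = [a,b]"
    by (metis One_nat_def Suc_1 len1 length_0_conv length_Suc_conv)
qed auto

definition c4map :: "nat \<Rightarrow> bool list" where
  "c4map n = [n = 2 \<or> n = 3, n = 1 \<or> n = 2]"

lemma iso_C4: "graph_iso C4 (hypercube 2)"
  unfolding graph_iso_def
proof (intro exI[of _ c4map] conjI ballI)
  show "bij_betw c4map (verts C4) (verts (hypercube 2))"
    unfolding bij_betw_def
  proof
    show "inj_on c4map (verts C4)" unfolding verts_C4 inj_on_def c4map_def by auto
    show "c4map ` verts C4 = verts (hypercube 2)"
    proof (rule set_eqI)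
      fix xs
      show "xs \<in> c4map ` verts C4 \<longleftrightarrow> xs \<in> verts (hypercube 2)"
      proof
        assume "xs \<in> c4map ` verts C4"
        then show "xs \<in> verts (hypercube 2)" unfolding verts_C4 c4map_def by auto
      next
        assume "xs \<in> verts (hypercube 2)"
        then obtain a b where ab: "xs = [a,b]" unfolding verts_hyp len2 by blast
        have "[a,b] \<in> c4map ` {0,1,2,3}"
        proof (cases a; cases b)
          assume "a" "b" then show ?thesis unfolding c4map_def by (intro image_eqI[of _ _ "2::nat"]) auto
        next
          assume "a" "\<not> b" then show ?thesis unfolding c4map_def by (intro image_eqI[of _ _ "3::nat"]) auto
        next
          assume "\<not> a" "b" then show ?thesis unfolding c4map_def by (intro image_eqI[of _ _ "1::nat"]) auto
        next
          assume "\<not> a" "\<not> b" then show ?thesis unfolding c4map_def by (intro image_eqI[of _ _ "0::nat"]) auto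
        qed
        then show "xs \<in> c4map ` verts C4" unfolding verts_C4 ab .
      qed
    qed
  qed
next
  fix u v assume "u \<in> verts C4" "v \<in> verts C4"
  then have "u \<in> {0,1,2,3}" "v \<in> {0,1,2,3}" unfolding verts_C4 .
  then show "adj C4 u v = adj (hypercube 2) (c4map u) (c4map v)"
    unfolding c4map_def adj_hyp2 adj_C4
    by (elim insertE emptyE) (simp_all add: doubleton_eq_iff)
qed

theorem proposition2p1:
  shows "(\<forall>(H1 :: 'a graph) (H2 :: 'b graph).
            is_IR_graph H1 \<and> is_IR_graph H2 \<longrightarrow> is_IR_graph (cart_prod H1 H2))
       \<and> (\<forall>n \<ge> 1. is_IR_graph (hypercube n))
       \<and> graph_iso C4 (hypercube 2) \<and> is_IR_graph C4"
proof (intro conjI allI impI)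
  fix H1 :: "'a graph" and H2 :: "'b graph"
  assume "is_IR_graph H1 \<and> is_IR_graph H2"
  then show "is_IR_graph (cart_prod H1 H2)" using part1 by blast
next
  fix n :: nat assume "n \<ge> 1" then show "is_IR_graph (hypercube n)" by (rule hyp_IR)
next
  show "graph_iso C4 (hypercube 2)" by (rule iso_C4)
next
  have "is_IR_graph (hypercube 2)" by (rule hyp_IR) simp
  then show "is_IR_graph C4" using graph_iso_sym[OF iso_C4] graph_C4 by (rule is_IR_graph_iso)
qed

end
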